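(* Let $\lambda>0$, $B,H>0$, $d,K\ge1$. Let $\mathcal T_1,\dots,\mathcal T_K$ be nonempty disjoint finite index sets with $\sum_{k}|\mathcal T_k|\le T$, and let $\phi_{k,t}\in\mathbb R^d$ ($k\in[K]$, $t\in\mathcal T_k$) satisfy $\|\phi_{k,t}\|_2\le BH$. Define $\Lambda_1=\lambda I$ and $\Lambda_{k+1}=\Lambda_k+\sum_{t\in\mathcal T_k}\phi_{k,t}\phi_{k,t}^\top$. Then $$\sum_{k=1}^K\frac1{|\mathcal T_k|}\sum_{t\in\mathcal T_k}\log\Big(1+|\mathcal T_k|\,\|\phi_{k,t}\|^2_{\Lambda_k^{-1}}\Big)\le d\log\Big(1+\frac{B^2H^2T}{\lambda d}\Big).$$
   Context: $\|v\|_Z=\sqrt{v^\top Zv}$ for a positive definite matrix $Z$. *)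

theory Defs
  imports "HOL-Analysis.Analysis"
begin

definition wnorm :: "real^'n^'n \<Rightarrow> real^'n \<Rightarrow> real" where
  "wnorm Z v = sqrt (v \<bullet> (Z *v v))"

definition outer :: "real^'n \<Rightarrow> real^'n^'n" where
  "outer v = (\<chi> i j. v $ i * v $ j)"

text \<open>Gram matrices: Lam 1 = lam I, Lam (k+1) = Lam k + sum over t in Ts k of phi k t phi k t^T.
  (Lam 0 is an unused dummy value.)\<close>
fun Lam :: "real \<Rightarrow> (nat \<Rightarrow> 'i set) \<Rightarrow> (nat \<Rightarrow> 'i \<Rightarrow> real^'n) \<Rightarrow> nat \<Rightarrow> real^'n^'n" where
  "Lam lam Ts phi 0 = lam *\<^sub>R mat 1"
| "Lam lam Ts phi (Suc 0) = lam *\<^sub>R mat 1"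
| "Lam lam Ts phi (Suc (Suc k)) =
     Lam lam Ts phi (Suc k) + (\<Sum>t\<in>Ts (Suc k). outer (phi (Suc k) t))"

end

theory Submission
  imports Defs
begin

definition outer2 :: "real^'n \<Rightarrow> real^'n \<Rightarrow> real^'n^'n" where
  "outer2 p q = (\<chi> i j. p $ i * q $ j)"

definition qf :: "real^'n^'n \<Rightarrow> real^'n \<Rightarrow> real" where
  "qf A x = x \<bullet> (A *v x)"

definition pd :: "real^'n^'n \<Rightarrow> bool" where
  "pd A \<longleftrightarrow> (\<forall>x. x \<noteq> 0 \<longrightarrow> 0 < qf A x)"

definition symm :: "real^'n^'n \<Rightarrow> bool" where
  "symm A \<longleftrightarrow> transpose A = A"

lemma outer_eq: "outer v = outer2 v v"
  by (simp add: outer_def outer2_def)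

lemma outer2_mulv: "outer2 p q *v x = (q \<bullet> x) *\<^sub>R p"
  by (simp add: outer2_def matrix_vector_mult_def vec_eq_iff inner_vec_def sum_distrib_left algebra_simps)

lemma mul_outer2: "A ** outer2 p q = outer2 (A *v p) q"
  by (simp add: outer2_def matrix_matrix_mult_def matrix_vector_mult_def vec_eq_iff sum_distrib_left ac_simps)

lemma outer2_mul: "outer2 p q ** B = outer2 p (transpose B *v q)"
  by (simp add: outer2_def matrix_matrix_mult_def matrix_vector_mult_def transpose_def vec_eq_iff sum_distrib_left algebra_simps)

lemma transpose_outer2: "transpose (outer2 p q) = outer2 q p"
  by (simp add: outer2_def transpose_def vec_eq_iff)

lemma outer2_add1: "outer2 (p + q) r = outer2 p r + outer2 q r"
  by (simp add: outer2_def vec_eq_iff algebra_simps)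
lemma outer2_add2: "outer2 r (p + q) = outer2 r p + outer2 r q"
  by (simp add: outer2_def vec_eq_iff algebra_simps)
lemma outer2_scale1: "outer2 (c *\<^sub>R p) q = c *\<^sub>R outer2 p q"
  by (simp add: outer2_def vec_eq_iff algebra_simps)
lemma outer2_scale2: "outer2 p (c *\<^sub>R q) = c *\<^sub>R outer2 p q"
  by (simp add: outer2_def vec_eq_iff algebra_simps)
lemma outer2_neg1: "outer2 (- p) q = - outer2 p q"
  by (simp add: outer2_def vec_eq_iff algebra_simps)
lemma outer2_diff1: "outer2 (p - q) r = outer2 p r - outer2 q r"
  by (simp add: outer2_def vec_eq_iff algebra_simps)

lemma sym_inner:
  assumes "symm A" shows "x \<bullet> (A *v y) = y \<bullet> (A *v x)"
proof -
  have "x \<bullet> (A *v y) = (x v* A) \<bullet> y" by (simp add: dot_lmul_matrix)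
  also have "x v* A = transpose A *v x"
    by (simp add: vec_eq_iff vector_matrix_mult_def matrix_vector_mult_def transpose_def mult.commute)
  also have "transpose A = A" using assms by (simp add: symm_def)
  finally show ?thesis by (simp add: inner_commute)
qed

lemma inv_props:
  assumes "invertible A"
  shows "A ** matrix_inv A = mat 1" "matrix_inv A ** A = mat 1"
proof -
  have "\<exists>A'. A ** A' = mat 1 \<and> A' ** A = mat 1" using assms by (simp add: invertible_def)
  hence "A ** matrix_inv A = mat 1 \<and> matrix_inv A ** A = mat 1"
    unfolding matrix_inv_def by (rule someI_ex)
  thus "A ** matrix_inv A = mat 1" "matrix_inv A ** A = mat 1" by auto
qed

lemma inv_mulv: assumes "invertible A" shows "A *v (matrix_inv A *v v) = v" "matrix_inv A *v (A *v v) = v"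
  using inv_props[OF assms] by (simp_all add: matrix_vector_mul_assoc)

lemma pd_invertible: assumes "pd A" shows "invertible A"
proof -
  have "\<forall>x. A *v x = 0 \<longrightarrow> x = 0"
    using assms by (auto simp: pd_def qf_def)
  then obtain B where "B ** A = mat 1" using matrix_left_invertible_ker by blast
  moreover hence "A ** B = mat 1" using matrix_left_right_inverse by blast
  ultimately show ?thesis unfolding invertible_def by blast
qed

lemma pd_qf_nonneg: "pd A \<Longrightarrow> 0 \<le> qf A x"
  by (cases "x = 0") (auto simp: pd_def qf_def intro: less_imp_le)

lemma inv_qf:
  assumes "pd A" shows "0 \<le> v \<bullet> (matrix_inv A *v v)"
proof -
  let ?w = "matrix_inv A *v v"
  have "v = A *v ?w" using inv_mulv[OF pd_invertible[OF assms]] by simp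
  hence "v \<bullet> ?w = qf A ?w" by (metis inner_commute qf_def)
  thus ?thesis using pd_qf_nonneg[OF assms] by simp
qed

lemma col_replace_det:
  "det (\<chi> i l. if l = k then x $ i else (mat 1 :: real^'n^'n) $ i $ l) = x $ k"
  using cramer_lemma[where A="mat 1 :: real^'n^'n" and k=k and x=x] unfolding matrix_vector_mul_lid det_I by simp

lemma matrix_add_rdistrib': "((A::real^'n^'n) + B) ** C = A ** C + B ** C"
  by (simp add: matrix_matrix_mult_def vec_eq_iff distrib_right sum.distrib)

lemma transpose_add': "transpose ((A::real^'n^'n) + B) = transpose A + transpose B"
  by (simp add: transpose_def vec_eq_iff)

lemma det_rank_one: "det (mat 1 + outer2 p q :: real^'n^'n) = 1 + p \<bullet> q"
proof (cases "p = 0")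
  case True
  have "outer2 p q = 0" using True by (simp add: outer2_def vec_eq_iff)
  thus ?thesis using True by simp
next
  case False
  then obtain k where pk: "p $ k \<noteq> 0" by (auto simp: vec_eq_iff)
  define P :: "real^'n^'n" where "P = (\<chi> i l. if l = k then p $ i else (mat 1 :: real^'n^'n) $ i $ l)"
  have dP: "det P = p $ k" unfolding P_def by (rule col_replace_det)
  define e :: "real^'n" where "e = axis k 1"
  have Pe: "P *v e = p"
  proof -
    have "(\<Sum>j\<in>UNIV. (if j = k then p $ i else (mat 1::real^'n^'n) $ i $ j) * (if j = k then 1 else 0)) = p $ i" for i
    proof -
      have "(\<lambda>j. (if j = k then p $ i else (mat 1::real^'n^'n) $ i $ j) * (if j = k then 1 else 0)) = (\<lambda>j. if j = k then p $ i else 0)"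
        (is "?f = _") by auto
      hence "(\<Sum>j\<in>UNIV. ?f j) = (\<Sum>j\<in>UNIV. if j = k then p $ i else 0)" by metis
      thus ?thesis by simp
    qed
    thus ?thesis by (simp add: P_def e_def matrix_vector_mult_def vec_eq_iff axis_def)
  qed
  define z where "z = transpose P *v q"
  have zk: "z $ k = p \<bullet> q"
    by (simp add: z_def P_def transpose_def matrix_vector_mult_def inner_vec_def)
  have "(mat 1 + outer2 p q) ** P = P + outer2 p z"
    by (simp add: matrix_add_rdistrib' outer2_mul z_def)
  moreover have "P ** (mat 1 + outer2 e z) = P + outer2 p z"
    by (simp add: matrix_add_ldistrib mul_outer2 Pe)
  ultimately have "det (mat 1 + outer2 p q) * det P = det P * det (mat 1 + outer2 e z)"
    by (metis det_mul)
  hence eq: "det (mat 1 + outer2 p q) = det (mat 1 + outer2 e z)" using dP pk by simp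
  have "det (mat 1 + outer2 e z) = det (transpose (mat 1 + outer2 e z))" by simp
  also have "transpose (mat 1 + outer2 e z) = mat 1 + outer2 z e"
    by (simp add: transpose_add' transpose_outer2)
  also have "mat 1 + outer2 z e = (\<chi> i l. if l = k then (e + z) $ i else (mat 1 :: real^'n^'n) $ i $ l)"
    by (simp add: outer2_def e_def vec_eq_iff axis_def mat_def)
  also have "det \<dots> = (e + z) $ k" by (rule col_replace_det)
  finally show ?thesis using eq zk by (simp add: e_def)
qed

lemma det_rank_one_gen:
  assumes "invertible A"
  shows "det (A + outer2 p q) = det A * (1 + (matrix_inv A *v p) \<bullet> q)"
proof -
  have "A ** (mat 1 + outer2 (matrix_inv A *v p) q) = A + outer2 p q"
    by (simp add: matrix_add_ldistrib mul_outer2 inv_mulv[OF assms])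
  hence "det (A + outer2 p q) = det A * det (mat 1 + outer2 (matrix_inv A *v p) q)"
    by (metis det_mul)
  thus ?thesis by (simp add: det_rank_one)
qed

lemma sum_mulv: "(\<Sum>t\<in>T. M t) *v x = (\<Sum>t\<in>T. M t *v x)"
proof (cases "finite T")
  case True thus ?thesis by (induction rule: finite_induct) (simp_all add: matrix_vector_mult_add_rdistrib)
qed simp

lemma qf_add: "qf (A + B) x = qf A x + qf B x"
  by (simp add: qf_def matrix_vector_mult_add_rdistrib inner_add_right)

lemma qf_sum: "qf (\<Sum>t\<in>T. M t) x = (\<Sum>t\<in>T. qf (M t) x)"
  by (simp add: qf_def sum_mulv inner_sum_right)

lemma qf_outer: "qf (outer w) u = (w \<bullet> u)^2"
  by (simp add: qf_def outer_eq outer2_mulv power2_eq_square inner_commute)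

lemma qf_expand:
  assumes "symm A"
  shows "qf A (x + t *\<^sub>R y) = qf A x + 2 * t * (x \<bullet> (A *v y)) + t^2 * qf A y"
proof -
  have "qf A (x + t *\<^sub>R y) = qf A x + t * (x \<bullet> (A *v y)) + t * (y \<bullet> (A *v x)) + t^2 * qf A y"
    by (simp add: qf_def matrix_vector_right_distrib matrix_vector_mult_scaleR inner_add_left inner_add_right power2_eq_square algebra_simps)
  thus ?thesis using sym_inner[OF assms, of y x] by simp
qed

lemma cs_form:
  assumes "symm A" and psd: "\<And>x. 0 \<le> qf A x"
  shows "(x \<bullet> (A *v y))^2 \<le> qf A x * qf A y"
proof -
  let ?a = "qf A y" and ?b = "x \<bullet> (A *v y)" and ?c = "qf A x"
  have Q: "0 \<le> ?c + 2 * t * ?b + t^2 * ?a" for t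
    using psd[of "x + t *\<^sub>R y"] qf_expand[OF assms(1)] by simp
  have a0: "0 \<le> ?a" "0 \<le> ?c" using psd by auto
  show ?thesis
  proof (cases "?a = 0")
    case True
    have "?b = 0"
    proof (rule ccontr)
      assume "?b \<noteq> 0"
      have "0 \<le> ?c + 2 * (-(?c+1)/(2*?b)) * ?b + (-(?c+1)/(2*?b))^2 * ?a" by (rule Q)
      also have "\<dots> = -1" using True \<open>?b \<noteq> 0\<close> by (simp add: field_simps)
      finally show False by simp
    qed
    thus ?thesis using a0 by simp
  next
    case False
    hence ap: "?a > 0" using a0 by simp
    have "0 \<le> ?c + 2 * (-?b/?a) * ?b + (-?b/?a)^2 * ?a" by (rule Q)
    also have "\<dots> = ?c - ?b^2 / ?a" using ap by (simp add: field_simps power2_eq_square)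
    finally have "?b^2 / ?a \<le> ?c" by simp
    thus ?thesis using ap by (simp add: field_simps)
  qed
qed

lemma symm_outer: "symm (outer w)"
  by (simp add: symm_def outer_def transpose_def vec_eq_iff mult.commute)

lemma symm_add: "symm A \<Longrightarrow> symm B \<Longrightarrow> symm (A + B)"
  by (simp add: symm_def transpose_add')

lemma symm_sum: "(\<And>t. t \<in> T \<Longrightarrow> symm (M t)) \<Longrightarrow> symm (\<Sum>t\<in>T. M t)"
  by (auto simp: symm_def transpose_def vec_eq_iff)

lemma pd_add_outer:
  assumes "pd A" shows "pd (A + (\<Sum>t\<in>T. outer (w t)))"
  using assms unfolding pd_def
  by (auto simp: qf_add qf_sum qf_outer intro!: add_pos_nonneg sum_nonneg)

lemma symm_add_outer:
  assumes "symm A" shows "symm (A + (\<Sum>t\<in>T. outer (w t)))"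
  using assms by (intro symm_add symm_sum symm_outer)

lemma inv_quad_mulA:
  assumes "invertible A" "symm A"
  shows "qf A (matrix_inv A *v w) = w \<bullet> (matrix_inv A *v w)"
  by (simp add: qf_def inv_mulv[OF assms(1)] inner_commute)

lemma loewner_bound:
  assumes pdA: "pd A" and sA: "symm A"
  shows "qf (A + (\<Sum>t\<in>T. outer (w t))) u \<le> (1 + (\<Sum>t\<in>T. w t \<bullet> (matrix_inv A *v w t))) * qf A u"
proof -
  have inv: "invertible A" using pd_invertible[OF pdA] .
  have psd: "\<And>x. 0 \<le> qf A x" using pd_qf_nonneg[OF pdA] .
  have trm: "(w t \<bullet> u)^2 \<le> (w t \<bullet> (matrix_inv A *v w t)) * qf A u" for t
  proof -
    let ?p = "matrix_inv A *v w t"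
    have "w t \<bullet> u = u \<bullet> (A *v ?p)" by (simp add: inv_mulv[OF inv] inner_commute)
    also have "\<dots> = ?p \<bullet> (A *v u)" by (rule sym_inner[OF sA])
    finally have "(w t \<bullet> u)^2 = (?p \<bullet> (A *v u))^2" by simp
    also have "\<dots> \<le> qf A ?p * qf A u" by (rule cs_form[OF sA psd])
    also have "qf A ?p = w t \<bullet> ?p" by (rule inv_quad_mulA[OF inv sA])
    finally show ?thesis .
  qed
  have "qf (A + (\<Sum>t\<in>T. outer (w t))) u = qf A u + (\<Sum>t\<in>T. (w t \<bullet> u)^2)"
    by (simp add: qf_add qf_sum qf_outer)
  also have "\<dots> \<le> qf A u + (\<Sum>t\<in>T. (w t \<bullet> (matrix_inv A *v w t)) * qf A u)"
    by (intro add_left_mono sum_mono trm)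
  also have "\<dots> = (1 + (\<Sum>t\<in>T. w t \<bullet> (matrix_inv A *v w t))) * qf A u"
    by (simp add: sum_distrib_left sum_distrib_right algebra_simps)
  finally show ?thesis .
qed

lemma inv_order:
  assumes pdA: "pd A" and sA: "symm A" and pdB: "pd B" and sB: "symm B" and c: "c > 0"
    and le: "\<And>u. qf B u \<le> c * qf A u"
  shows "v \<bullet> (matrix_inv A *v v) \<le> c * (v \<bullet> (matrix_inv B *v v))"
proof -
  have iA: "invertible A" using pd_invertible[OF pdA] .
  have iB: "invertible B" using pd_invertible[OF pdB] .
  let ?a = "matrix_inv A *v v" and ?b = "matrix_inv B *v v"
  have qa: "qf A ?a = v \<bullet> ?a" by (rule inv_quad_mulA[OF iA sA])
  have qb: "qf B ?b = v \<bullet> ?b" by (rule inv_quad_mulA[OF iB sB])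
  have "v \<bullet> ?a = ?a \<bullet> (B *v ?b)" by (simp add: inv_mulv[OF iB] inner_commute)
  hence "(v \<bullet> ?a)^2 = (?a \<bullet> (B *v ?b))^2" by simp
  also have "\<dots> \<le> qf B ?a * qf B ?b" by (rule cs_form[OF sB pd_qf_nonneg[OF pdB]])
  also have "\<dots> \<le> (c * qf A ?a) * qf B ?b"
    by (rule mult_right_mono[OF le pd_qf_nonneg[OF pdB]])
  finally have *: "(v \<bullet> ?a)^2 \<le> c * (v \<bullet> ?a) * (v \<bullet> ?b)" using qa qb by simp
  have a0: "0 \<le> v \<bullet> ?a" using inv_qf[OF pdA] .
  show ?thesis
  proof (cases "v \<bullet> ?a = 0")
    case True thus ?thesis using inv_qf[OF pdB, of v] c by simp
  next
    case False
    hence "v \<bullet> ?a > 0" using a0 by simp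
    thus ?thesis using * by (simp add: power2_eq_square mult.assoc mult.left_commute)
  qed
qed

lemma block_det:
  assumes pdA: "pd A" and sA: "symm A" and dA: "det A > 0" and fin: "finite T"
  shows "det A * (1 + (\<Sum>t\<in>T. w t \<bullet> (matrix_inv A *v w t))) \<le> det (A + (\<Sum>t\<in>T. outer (w t)))"
  using fin
proof (induction rule: finite_induct)
  case empty thus ?case by simp
next
  case (insert s F)
  define M where "M = A + (\<Sum>t\<in>F. outer (w t))"
  define c where "c = 1 + (\<Sum>t\<in>F. w t \<bullet> (matrix_inv A *v w t))"
  define x where "x = w s \<bullet> (matrix_inv A *v w s)"
  define y where "y = w s \<bullet> (matrix_inv M *v w s)"
  have pdM: "pd M" unfolding M_def by (rule pd_add_outer[OF pdA])
  have sM: "symm M" unfolding M_def by (rule symm_add_outer[OF sA])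
  have c1: "c \<ge> 1" unfolding c_def using inv_qf[OF pdA] by (simp add: sum_nonneg)
  have y0: "y \<ge> 0" unfolding y_def using inv_qf[OF pdM] .
  have xy: "x \<le> c * y" unfolding x_def y_def
    by (rule inv_order[OF pdA sA pdM sM]) (use c1 loewner_bound[OF pdA sA] in \<open>auto simp: M_def c_def\<close>)
  have IH: "det A * c \<le> det M" using insert.IH by (simp add: M_def c_def)
  have eqM: "A + (\<Sum>t\<in>insert s F. outer (w t)) = M + outer2 (w s) (w s)"
    using insert.hyps by (simp add: M_def outer_eq add.assoc add.commute)
  have dM: "det (M + outer2 (w s) (w s)) = det M * (1 + y)"
    using det_rank_one_gen[OF pd_invertible[OF pdM]] by (simp add: y_def inner_commute)
  have "det A * (1 + (\<Sum>t\<in>insert s F. w t \<bullet> (matrix_inv A *v w t))) = det A * (c + x)"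
    using insert.hyps by (simp add: c_def x_def algebra_simps)
  also have "\<dots> \<le> det A * (c + c * y)" using xy dA by simp
  also have "\<dots> = (det A * c) * (1 + y)" by (simp add: algebra_simps)
  also have "\<dots> \<le> det M * (1 + y)" using IH y0 by (intro mult_right_mono) auto
  finally show ?case using eqM dM by simp
qed

lemma mulv_axis: "(A::real^'n^'n) *v axis j 1 = (\<chi> i. A $ i $ j)"
  by (simp add: vec_eq_iff matrix_vector_mul_component inner_axis)

lemma axis_inner: "axis j 1 \<bullet> (x::real^'n) = x $ j"
  by (simp add: inner_axis')

lemma qf_outer2: "qf (outer2 p q) x = (q \<bullet> x) * (x \<bullet> p)"
  by (simp add: qf_def outer2_mulv)

lemma qf_diff: "qf (A - B) x = qf A x - qf B x"
  by (simp add: qf_def matrix_vector_mult_diff_rdistrib inner_diff_right)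

lemma symm_entry: "symm A \<Longrightarrow> A $ i $ k = A $ k $ i"
  unfolding symm_def by (metis transpose_def vec_lambda_beta)

lemma matrix_diff_ldistrib': "(A::real^'n^'n) ** (B - C) = A ** B - A ** C"
  by (simp add: matrix_matrix_mult_def vec_eq_iff right_diff_distrib sum_subtractf)

lemma matrix_diff_rdistrib': "((A::real^'n^'n) - B) ** C = A ** C - B ** C"
  by (simp add: matrix_matrix_mult_def vec_eq_iff left_diff_distrib sum_subtractf)

lemma transpose_diff': "transpose ((A::real^'n^'n) - B) = transpose A - transpose B"
  by (simp add: transpose_def vec_eq_iff)

definition idout :: "'n set \<Rightarrow> real^'n^'n \<Rightarrow> bool" where
  "idout S A \<longleftrightarrow> (\<forall>i k. (i \<notin> S \<or> k \<notin> S) \<longrightarrow> A $ i $ k = (if i = k then 1 else 0))"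

lemma hadamard_step:
  fixes A :: "real^'n^'n" and j :: 'n
  assumes pdA: "pd A" and sA: "symm A" and io: "idout (insert j S) A" and jS: "j \<notin> S"
    and IH: "\<And>B. pd B \<Longrightarrow> symm B \<Longrightarrow> idout S B \<Longrightarrow> 0 < det B \<and> det B \<le> (\<Prod>i\<in>S. B $ i $ i)"
  shows "0 < det A \<and> det A \<le> (\<Prod>i\<in>insert j S. A $ i $ i)"
proof -
  define a where "a = A $ j $ j"
  define e :: "real^'n" where "e = axis j 1"
  define b :: "real^'n" where "b = (\<chi> i. if i = j then 0 else A $ i $ j)"
  define A' :: "real^'n^'n" where "A' = (\<chi> i k. if i = j \<or> k = j then (if i = k then 1 else 0) else A $ i $ k)"
  have ex: "e \<bullet> x = x $ j" for x unfolding e_def by (rule axis_inner)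
  have be: "b \<bullet> e = 0" using ex[of b] by (simp add: b_def inner_commute)
  have ee: "e \<bullet> e = 1" using ex[of e] by (simp add: e_def)
  have F1: "A = A' + outer2 ((a - 1) *\<^sub>R e + b) e + outer2 e b"
    unfolding vec_eq_iff
  proof (intro allI)
    fix i k
    show "A $ i $ k = (A' + outer2 ((a - 1) *\<^sub>R e + b) e + outer2 e b) $ i $ k"
      using symm_entry[OF sA, of j k]
      by (auto simp: A'_def outer2_def e_def b_def a_def axis_def)
  qed
  have Ae: "A *v e = a *\<^sub>R e + b"
    unfolding e_def mulv_axis by (auto simp: vec_eq_iff a_def b_def axis_def)
  have A'e: "A' *v e = e"
    unfolding e_def mulv_axis by (auto simp: vec_eq_iff A'_def axis_def)
  have sA': "symm A'"
    by (auto simp: symm_def A'_def transpose_def vec_eq_iff symm_entry[OF sA])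
  have ioA': "idout S A'"
    using io by (auto simp: idout_def A'_def)
  have A'alt: "A' = A - outer2 ((a - 1) *\<^sub>R e + b) e - outer2 e b"
    using F1 by (simp add: algebra_simps)
  have a0: "a > 0"
  proof -
    have "e \<noteq> 0" using ex[of e] ee by auto
    hence "0 < qf A e" using pdA by (simp add: pd_def)
    thus ?thesis by (simp add: qf_def Ae inner_add_right ee inner_commute be)
  qed
  have pdA': "pd A'"
    unfolding pd_def
  proof (intro allI impI)
    fix x :: "real^'n" assume x0: "x \<noteq> 0"
    define z where "z = x + (- (x $ j)) *\<^sub>R e"
    have "qf A z = qf A x + 2 * (- (x $ j)) * (x \<bullet> (A *v e)) + (- (x $ j))^2 * qf A e"
      unfolding z_def by (rule qf_expand[OF sA])
    also have "x \<bullet> (A *v e) = a * x $ j + b \<bullet> x"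
      using ex[of x] by (simp add: Ae inner_add_right inner_commute)
    also have "qf A e = a" by (simp add: qf_def Ae inner_add_right ee inner_commute be)
    finally have qz: "qf A z = qf A x - a * (x $ j)^2 - 2 * (x $ j) * (b \<bullet> x)"
      by (simp add: algebra_simps power2_eq_square)
    have qA': "qf A' x = qf A x - (x $ j) * ((a - 1) * x $ j + x \<bullet> b) - (b \<bullet> x) * (x $ j)"
      unfolding A'alt qf_diff qf_outer2 using ex[of x]
      by (simp add: inner_add_right inner_commute)
    have "qf A' x = qf A z + (x $ j)^2"
      using qA' qz by (simp add: algebra_simps power2_eq_square inner_commute)
    moreover have "0 \<le> qf A z" by (rule pd_qf_nonneg[OF pdA])
    moreover have "x $ j = 0 \<Longrightarrow> 0 < qf A z" using x0 pdA by (simp add: z_def pd_def)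
    ultimately show "0 < qf A' x"
      by (cases "x $ j = 0") (auto intro: add_nonneg_pos)
  qed
  have diag: "A' $ i $ i = A $ i $ i" if "i \<in> S" for i using that jS by (auto simp: A'_def)
  from IH[OF pdA' sA' ioA'] have dA'0: "0 < det A'" and dA'le: "det A' \<le> (\<Prod>i\<in>S. A $ i $ i)"
    using diag by (auto cong: prod.cong)
  have iA': "invertible A'" by (rule pd_invertible[OF pdA'])
  define m where "m = matrix_inv A' *v b"
  have A'm: "A' *v m = b" by (simp add: m_def inv_mulv[OF iA'])
  have Aie: "matrix_inv A' *v e = e" using inv_mulv(2)[OF iA', of e] A'e by simp
  have em: "e \<bullet> m = 0"
  proof -
    have "e \<bullet> m = m \<bullet> (A' *v e)" by (simp add: A'e inner_commute)
    also have "\<dots> = e \<bullet> (A' *v m)" by (rule sym_inner[OF sA'])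
    also have "\<dots> = 0" by (simp add: A'm inner_commute be)
    finally show ?thesis .
  qed
  define bm where "bm = b \<bullet> m"
  have bm0: "0 \<le> bm"
  proof -
    have "bm = qf A' m" by (simp add: bm_def qf_def A'm inner_commute)
    thus ?thesis using pd_qf_nonneg[OF pdA'] by simp
  qed
  have Am: "A *v m = b + bm *\<^sub>R e"
    apply (subst F1)
    by (simp add: matrix_vector_mult_add_rdistrib outer2_mulv A'm em inner_commute bm_def)
  define X where "X = A - outer2 (b + bm *\<^sub>R e) e"
  have X: "A ** (mat 1 - outer2 m e) = X"
    by (simp add: X_def matrix_diff_ldistrib' mul_outer2 Am)
  have tXm: "transpose X *v m = b"
  proof -
    have "transpose X = A - outer2 e (b + bm *\<^sub>R e)"
      using sA by (simp add: X_def transpose_diff' transpose_outer2 symm_def)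
    hence "transpose X *v m = A *v m - ((b + bm *\<^sub>R e) \<bullet> m) *\<^sub>R e"
      by (simp add: matrix_vector_mult_diff_rdistrib outer2_mulv)
    also have "(b + bm *\<^sub>R e) \<bullet> m = bm" by (simp add: inner_add_left em bm_def)
    finally show ?thesis by (simp add: Am)
  qed
  define Y where "Y = A' + outer2 ((a - 1 - bm) *\<^sub>R e) e"
  have Yeq: "(mat 1 - outer2 e m) ** X = Y"
  proof -
    have "(mat 1 - outer2 e m) ** X = X - outer2 e (transpose X *v m)"
      by (simp only: matrix_diff_rdistrib' outer2_mul matrix_mul_lid)
    also have "\<dots> = X - outer2 e b" by (simp only: tXm)
    also have "\<dots> = A' + outer2 ((a - 1) *\<^sub>R e + b) e + outer2 e b - outer2 (b + bm *\<^sub>R e) e - outer2 e b"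
      unfolding X_def by (subst F1) simp
    also have "\<dots> = Y" unfolding Y_def by (simp add: outer2_def vec_eq_iff algebra_simps)
    finally show ?thesis .
  qed
  have d1: "det (mat 1 - outer2 m e) = 1"
    using det_rank_one[of "- m" e] by (simp add: outer2_neg1 em inner_commute)
  have d2: "det (mat 1 - outer2 e m) = 1"
    using det_rank_one[of "- e" m] by (simp add: outer2_neg1 em)
  have dY: "det Y = det A"
    using Yeq X d1 d2 by (metis det_mul mult_1 mult_1_right)
  have dY2: "det Y = det A' * (a - bm)"
    unfolding Y_def using det_rank_one_gen[OF iA', of "(a - 1 - bm) *\<^sub>R e" e]
    by (simp add: matrix_vector_mult_scaleR Aie ee)
  have pos: "a - bm > 0"
  proof -
    define y where "y = e - m"
    have Ay: "A *v y = (a - bm) *\<^sub>R e"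
      by (simp add: y_def matrix_vector_mult_diff_distrib Ae Am algebra_simps)
    have "y \<noteq> 0" using ex[of y] ex[of e] ex[of m] em ee by (auto simp: y_def)
    hence "0 < qf A y" using pdA by (simp add: pd_def)
    also have "qf A y = a - bm" unfolding qf_def Ay by (simp add: y_def inner_diff_left inner_diff_right ee em inner_commute)
    finally show ?thesis .
  qed
  have "det A = (a - bm) * det A'" using dY dY2 by (simp add: mult.commute)
  moreover have "(a - bm) * det A' \<le> a * (\<Prod>i\<in>S. A $ i $ i)"
  proof -
    have "(a - bm) * det A' \<le> a * det A'" using bm0 dA'0 by (intro mult_right_mono) auto
    also have "\<dots> \<le> a * (\<Prod>i\<in>S. A $ i $ i)" using dA'le a0 by (intro mult_left_mono) auto
    finally show ?thesis .
  qed
  ultimately show ?thesis using pos dA'0 jS by (simp add: a_def)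
qed

lemma hadamard_aux:
  fixes S :: "'n::finite set"
  assumes "finite S"
  shows "\<And>A :: real^'n^'n. pd A \<Longrightarrow> symm A \<Longrightarrow> idout S A \<Longrightarrow> 0 < det A \<and> det A \<le> (\<Prod>i\<in>S. A $ i $ i)"
  using assms
proof (induction S rule: finite_induct)
  case empty
  hence "A = mat 1" by (auto simp: idout_def vec_eq_iff mat_def)
  thus ?case by simp
next
  case (insert j S)
  show ?case by (rule hadamard_step[OF insert.prems insert.hyps(2) insert.IH])
qed

lemma hadamard:
  fixes A :: "real^'n^'n"
  assumes "pd A" "symm A"
  shows "0 < det A \<and> det A \<le> (\<Prod>i\<in>UNIV. A $ i $ i)"
  by (rule hadamard_aux[OF finite assms]) (simp add: idout_def)

lemma pd_diag: "pd (A::real^'n^'n) \<Longrightarrow> 0 < A $ i $ i"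
proof -
  assume "pd A"
  moreover have "axis i (1::real) \<noteq> 0" by (simp add: axis_eq_0_iff)
  ultimately have "0 < qf A (axis i 1)" by (simp add: pd_def)
  thus ?thesis by (simp add: qf_def mulv_axis axis_inner)
qed

lemma amgm_ln:
  fixes a :: "'a \<Rightarrow> real"
  assumes fin: "finite I" and ne: "I \<noteq> {}" and pos: "\<And>i. i \<in> I \<Longrightarrow> 0 < a i"
  shows "(\<Sum>i\<in>I. ln (a i)) \<le> real (card I) * ln ((\<Sum>i\<in>I. a i) / real (card I))"
proof -
  define n where "n = real (card I)"
  have n0: "n > 0" using fin ne by (simp add: n_def card_gt_0_iff)
  define m where "m = (\<Sum>i\<in>I. a i) / n"
  have m0: "m > 0" unfolding m_def using n0 pos ne fin by (intro divide_pos_pos sum_pos) auto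
  have "ln (a i) - ln m \<le> a i / m - 1" if "i \<in> I" for i
  proof -
    have "ln (a i) - ln m = ln (a i / m)" using pos[OF that] m0 by (simp add: ln_div)
    also have "\<dots> \<le> a i / m - 1" using pos[OF that] m0 by (intro ln_le_minus_one) simp
    finally show ?thesis .
  qed
  hence "(\<Sum>i\<in>I. ln (a i) - ln m) \<le> (\<Sum>i\<in>I. a i / m - 1)" by (rule sum_mono)
  also have "(\<Sum>i\<in>I. a i / m - 1) = (\<Sum>i\<in>I. a i) / m - n"
    by (simp add: sum_subtractf sum_divide_distrib n_def)
  also have "\<dots> = 0"
  proof -
    have "(\<Sum>i\<in>I. a i) > 0" using m0 n0 by (simp add: m_def zero_less_divide_iff)
    thus ?thesis using n0 by (simp add: m_def)
  qed
  finally have "(\<Sum>i\<in>I. ln (a i)) \<le> n * ln m" by (simp add: sum_subtractf n_def)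
  thus ?thesis by (simp add: n_def m_def)
qed

lemma det_scalar_id: "det (c *\<^sub>R mat 1 :: real^'n^'n) = c ^ CARD('n)"
proof -
  have "(c *\<^sub>R mat 1 :: real^'n^'n) = (\<chi> i. c *s (mat 1 :: real^'n^'n) $ i)"
    by (simp add: vec_eq_iff mat_def)
  hence "det (c *\<^sub>R mat 1 :: real^'n^'n) = (\<Prod>i\<in>(UNIV::'n set). c) * det (\<chi> i. (mat 1 :: real^'n^'n) $ i)"
    using det_rows_mul[of "\<lambda>i. c" "\<lambda>i. (mat 1 :: real^'n^'n) $ i"] by simp
  thus ?thesis by simp
qed

lemma pd_scalar_id: "c > 0 \<Longrightarrow> pd (c *\<^sub>R mat 1 :: real^'n^'n)"
  by (simp add: pd_def qf_def scaleR_matrix_vector_assoc[symmetric])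

lemma symm_scalar_id: "symm (c *\<^sub>R mat 1 :: real^'n^'n)"
  by (simp add: symm_def transpose_def vec_eq_iff mat_def)

lemma Lam_Suc: "1 \<le> k \<Longrightarrow> Lam lam Ts phi (Suc k) = Lam lam Ts phi k + (\<Sum>t\<in>Ts k. outer (phi k t))"
  by (cases k) auto

lemma Lam_pd: "lam > 0 \<Longrightarrow> 1 \<le> k \<Longrightarrow> pd (Lam lam Ts phi k) \<and> symm (Lam lam Ts phi k)"
proof (induction k)
  case 0 thus ?case by simp
next
  case (Suc k)
  show ?case
  proof (cases "k = 0")
    case True thus ?thesis using Suc.prems by (simp add: pd_scalar_id symm_scalar_id)
  next
    case False
    hence "1 \<le> k" by simp
    thus ?thesis using Suc.IH Suc.prems by (simp add: Lam_Suc pd_add_outer symm_add_outer)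
  qed
qed

lemma trace_outer: "trace (outer (w::real^'n)) = (norm w)^2"
  by (simp add: trace_def outer_def power2_norm_eq_inner inner_vec_def)

lemma trace_sum: "trace (\<Sum>t\<in>T. M t :: real^'n^'n) = (\<Sum>t\<in>T. trace (M t))"
  by (simp add: trace_def sum_component) (rule sum.swap)

lemma trace_scalar_id: "trace (c *\<^sub>R mat 1 :: real^'n^'n) = real CARD('n) * c"
  by (simp add: trace_def mat_def)

theorem mainTheorem10:
  fixes lam B H :: real and K T :: nat
    and Ts :: "nat \<Rightarrow> 'i set"
    and phi :: "nat \<Rightarrow> 'i \<Rightarrow> real^'d"
  assumes "lam > 0" and "B > 0" and "H > 0" and "K \<ge> 1"
    and "\<And>k. k \<in> {1..K} \<Longrightarrow> finite (Ts k) \<and> Ts k \<noteq> {}"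
    and "\<And>k j. k \<in> {1..K} \<Longrightarrow> j \<in> {1..K} \<Longrightarrow> k \<noteq> j \<Longrightarrow> Ts k \<inter> Ts j = {}"
    and "(\<Sum>k\<in>{1..K}. card (Ts k)) \<le> T"
    and "\<And>k t. k \<in> {1..K} \<Longrightarrow> t \<in> Ts k \<Longrightarrow> norm (phi k t) \<le> B * H"
  shows "(\<Sum>k\<in>{1..K}. (1 / real (card (Ts k))) *
            (\<Sum>t\<in>Ts k. ln (1 + real (card (Ts k)) *
               (wnorm (matrix_inv (Lam lam Ts phi k)) (phi k t))\<^sup>2)))
         \<le> real CARD('d) * ln (1 + B\<^sup>2 * H\<^sup>2 * real T / (lam * real CARD('d)))"
proof -
  note lam0 = assms(1) and fin = assms(5) and Tbound = assms(7) and nb = assms(8)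
  define L where "L = Lam lam Ts phi"
  define d where "d = real CARD('d)"
  have d0: "d > 0" by (simp add: d_def)
  have Lpd: "pd (L k)" "symm (L k)" if "1 \<le> k" for k
    using Lam_pd[OF lam0 that] by (auto simp: L_def)
  have Ldet: "0 < det (L k)" if "1 \<le> k" for k
    using hadamard[OF Lpd[OF that]] by simp
  define x where "x k t = phi k t \<bullet> (matrix_inv (L k) *v phi k t)" for k t
  have x0: "0 \<le> x k t" if "1 \<le> k" for k t
    unfolding x_def by (rule inv_qf[OF Lpd(1)[OF that]])
  have wn: "(wnorm (matrix_inv (L k)) (phi k t))\<^sup>2 = x k t" if "1 \<le> k" for k t
    using x0[OF that] by (simp add: wnorm_def x_def)
  have block: "(1 / real (card (Ts k))) * (\<Sum>t\<in>Ts k. ln (1 + real (card (Ts k)) *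
               (wnorm (matrix_inv (L k)) (phi k t))\<^sup>2)) \<le> ln (det (L (Suc k))) - ln (det (L k))"
    if k: "k \<in> {1..K}" for k
  proof -
    have k1: "1 \<le> k" using k by simp
    define n where "n = real (card (Ts k))"
    have finT: "finite (Ts k)" and neT: "Ts k \<noteq> {}" using fin[OF k] by auto
    have n0: "n > 0" using finT neT by (simp add: n_def card_gt_0_iff)
    define S where "S = (\<Sum>t\<in>Ts k. x k t)"
    have S0: "0 \<le> S" unfolding S_def using x0[OF k1] by (simp add: sum_nonneg)
    have "(\<Sum>t\<in>Ts k. ln (1 + n * x k t)) \<le> n * ln ((\<Sum>t\<in>Ts k. 1 + n * x k t) / n)"
      unfolding n_def by (rule amgm_ln[OF finT neT]) (use x0[OF k1] n_def n0 in \<open>auto intro: add_pos_nonneg\<close>)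
    also have "(\<Sum>t\<in>Ts k. 1 + n * x k t) / n = 1 + S"
      using n0 by (simp add: sum.distrib sum_distrib_left sum_distrib_right S_def n_def field_simps)
    finally have j: "(1 / n) * (\<Sum>t\<in>Ts k. ln (1 + n * x k t)) \<le> ln (1 + S)"
      using n0 by (simp add: field_simps)
    have "det (L k) * (1 + S) \<le> det (L (Suc k))"
      using block_det[OF Lpd[OF k1] Ldet[OF k1] finT, of "phi k"]
      by (simp add: S_def x_def L_def Lam_Suc[OF k1])
    hence "ln (det (L k) * (1 + S)) \<le> ln (det (L (Suc k)))"
      using Ldet[OF k1] S0 by (intro ln_mono) (auto intro: mult_pos_pos)
    hence "ln (1 + S) \<le> ln (det (L (Suc k))) - ln (det (L k))"
      using Ldet[OF k1] S0 by (simp add: ln_mult)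
    with j show ?thesis using wn[OF k1] by (simp add: n_def)
  qed
  have "(\<Sum>k\<in>{1..K}. (1 / real (card (Ts k))) * (\<Sum>t\<in>Ts k. ln (1 + real (card (Ts k)) *
               (wnorm (matrix_inv (L k)) (phi k t))\<^sup>2)))
        \<le> (\<Sum>k\<in>{1..K}. ln (det (L (Suc k))) - ln (det (L k)))"
    by (rule sum_mono) (rule block)
  also have "\<dots> = ln (det (L (Suc K))) - ln (det (L 1))"
    by (rule sum_Suc_diff) simp
  also have "ln (det (L 1)) = d * ln lam"
    using lam0 by (simp add: L_def det_scalar_id d_def ln_realpow)
  finally have step1: "(\<Sum>k\<in>{1..K}. (1 / real (card (Ts k))) * (\<Sum>t\<in>Ts k. ln (1 + real (card (Ts k)) *
               (wnorm (matrix_inv (L k)) (phi k t))\<^sup>2))) \<le> ln (det (L (Suc K))) - d * ln lam" .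
  have tr: "trace (L k) \<le> d * lam + real (\<Sum>j\<in>{1..<k}. card (Ts j)) * (B * H)^2"
    if "1 \<le> k" "k \<le> Suc K" for k
    using that
  proof (induction k)
    case 0 thus ?case by simp
  next
    case (Suc k)
    show ?case
    proof (cases "k = 0")
      case True thus ?thesis by (simp add: L_def trace_scalar_id d_def)
    next
      case False
      hence k1: "1 \<le> k" by simp
      have kK: "k \<in> {1..K}" using k1 Suc.prems by simp
      have "trace (L (Suc k)) = trace (L k) + (\<Sum>t\<in>Ts k. (norm (phi k t))^2)"
        by (simp add: L_def Lam_Suc[OF k1] trace_add trace_sum trace_outer)
      also have "(\<Sum>t\<in>Ts k. (norm (phi k t))^2) \<le> (\<Sum>t\<in>Ts k. (B * H)^2)"
        using nb[OF kK] by (intro sum_mono power_mono) auto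
      also have "\<dots> = real (card (Ts k)) * (B * H)^2" by simp
      also have "trace (L k) \<le> d * lam + real (\<Sum>j\<in>{1..<k}. card (Ts j)) * (B * H)^2"
        using Suc.IH k1 Suc.prems by simp
      finally show ?thesis using k1 by (simp add: algebra_simps)
    qed
  qed
  have trK: "trace (L (Suc K)) \<le> d * lam + real T * (B * H)^2"
  proof -
    have "trace (L (Suc K)) \<le> d * lam + real (\<Sum>j\<in>{1..<Suc K}. card (Ts j)) * (B * H)^2"
      by (rule tr) auto
    also have "{1..<Suc K} = {1..K}" by auto
    also have "real (\<Sum>j\<in>{1..K}. card (Ts j)) * (B * H)^2 \<le> real T * (B * H)^2"
      using Tbound by (intro mult_right_mono) (simp_all only: of_nat_le_iff zero_le_power2)
    finally show ?thesis by simp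
  qed
  have diagpos: "0 < L (Suc K) $ i $ i" for i using pd_diag[OF Lpd(1)] by simp
  have trpos: "0 < trace (L (Suc K))"
    unfolding trace_def using diagpos by (intro sum_pos) auto
  have "ln (det (L (Suc K))) \<le> ln (\<Prod>i\<in>UNIV. L (Suc K) $ i $ i)"
    using hadamard[OF Lpd[of "Suc K"]] by (intro ln_mono) auto
  also have "\<dots> = (\<Sum>i\<in>UNIV. ln (L (Suc K) $ i $ i))"
    using diagpos by (intro ln_prod) (auto, metis less_irrefl)
  also have "\<dots> \<le> d * ln (trace (L (Suc K)) / d)"
    unfolding d_def trace_def by (rule amgm_ln) (use diagpos in auto)
  finally have step2: "ln (det (L (Suc K))) \<le> d * ln (trace (L (Suc K)) / d)" .
  have "d * ln (trace (L (Suc K)) / d) - d * ln lam = d * ln (trace (L (Suc K)) / (d * lam))"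
    using trpos d0 lam0 by (simp add: ln_div ln_mult right_diff_distrib distrib_left)
  also have "\<dots> \<le> d * ln (1 + B\<^sup>2 * H\<^sup>2 * real T / (lam * d))"
  proof -
    have "trace (L (Suc K)) / (d * lam) \<le> (d * lam + real T * (B * H)^2) / (d * lam)"
      using trK d0 lam0 by (intro divide_right_mono) auto
    also have "\<dots> = 1 + B\<^sup>2 * H\<^sup>2 * real T / (lam * d)"
      using d0 lam0 by (simp add: field_simps power_mult_distrib)
    finally have "ln (trace (L (Suc K)) / (d * lam)) \<le> ln (1 + B\<^sup>2 * H\<^sup>2 * real T / (lam * d))"
      using trpos d0 lam0 by (intro ln_mono) auto
    thus ?thesis using d0 by simp
  qed
  finally show ?thesis using step1 step2 by (simp add: L_def d_def)
qed

end
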